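(* Let $G$ and $H$ be groups with $\mathrm{Con}(G)=\mathrm{Con}(H)$. Suppose $G$ satisfies the following ping-pong conditions: there are a set $X$ with a $G$-action, subgroups $\Gamma_1,\Gamma_2$ of $G$ with $|\Gamma_1|\ge3$, $|\Gamma_2|\ge2$, and subsets $X_1,X_2\subseteq X$ with $X_2\not\subseteq X_1$, such that $\gamma_1(X_2)\subseteq X_1$ and $\gamma_2(X_1)\subseteq X_2$ for all nonidentity $\gamma_1\in\Gamma_1$, $\gamma_2\in\Gamma_2$. Then $H$ also satisfies these conditions (for some set with an $H$-action, some subgroups of $H$ and some subsets).
   Context: For an action $G\curvearrowright X$, an ordered tuple $\mathfrak{g}=(g_1,\dots,g_n)$ of elements of $G$ and a finite partition $\mathcal{E}=\{E_1,\dots,E_m\}$ of $X$, a configuration is a tuple $C=(C_0,\dots,C_n)\in\{1,\dots,m\}^{n+1}$ such that some $x\in E_{C_0}$ satisfies $g_i\cdot x\in E_{C_i}$ for $i=1,\dots,n$; the set of these is $\mathrm{Con}(\mathfrak{g},\mathcal{E};X)$. $\mathrm{Con}(G)$ is the collection $\{\mathrm{Con}(\mathfrak{g},\mathcal{E};G)\}$ over all finite tuples $\mathfrak{g}$ in $G$ and finite partitions $\mathcal{E}$ of $G$, for the action of $G$ on itself by left multiplication. *)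

theory Defs
  imports "HOL-Algebra.Group_Action"
begin

text \<open>A finite (ordered) partition of a set S: a list of nonempty, pairwise
  disjoint sets whose union is S.  The pieces E_1..E_m are Es!0 .. Es!(m-1).\<close>
definition is_fin_partition :: "'a set \<Rightarrow> 'a set list \<Rightarrow> bool" where
  "is_fin_partition S Es \<longleftrightarrow>
     (\<Union>(set Es) = S) \<and> (\<forall>i<length Es. Es ! i \<noteq> {}) \<and>
     (\<forall>i<length Es. \<forall>j<length Es. i \<noteq> j \<longrightarrow> Es ! i \<inter> Es ! j = {})"

text \<open>Con(g, E; G) for the left multiplication action of G on itself.
  Configurations are lists C of length n+1 with entries in {1..m}
  (C!0 = C_0, ..., C!n = C_n).\<close>
definition Con_tuple :: "('a, 'b) monoid_scheme \<Rightarrow> 'a list \<Rightarrow> 'a set list \<Rightarrow> nat list set" where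
  "Con_tuple G gs Es =
     {C. length C = length gs + 1 \<and> (\<forall>j<length C. 1 \<le> C ! j \<and> C ! j \<le> length Es) \<and>
         (\<exists>x\<in>carrier G. x \<in> Es ! (C ! 0 - 1) \<and>
            (\<forall>i<length gs. gs ! i \<otimes>\<^bsub>G\<^esub> x \<in> Es ! (C ! (Suc i) - 1)))}"

definition Con :: "('a, 'b) monoid_scheme \<Rightarrow> nat list set set" where
  "Con G = {Con_tuple G gs Es | gs Es. set gs \<subseteq> carrier G \<and> is_fin_partition (carrier G) Es}"

definition pingpong_witness ::
  "('a, 'b) monoid_scheme \<Rightarrow> 'x set \<Rightarrow> ('a \<Rightarrow> 'x \<Rightarrow> 'x) \<Rightarrow> bool" where
  "pingpong_witness G X \<phi> \<longleftrightarrow> group_action G X \<phi> \<and>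
     (\<exists>\<Gamma>1 \<Gamma>2 X1 X2. subgroup \<Gamma>1 G \<and> subgroup \<Gamma>2 G \<and>
        (infinite \<Gamma>1 \<or> card \<Gamma>1 \<ge> 3) \<and> (infinite \<Gamma>2 \<or> card \<Gamma>2 \<ge> 2) \<and>
        X1 \<subseteq> X \<and> X2 \<subseteq> X \<and> \<not> X2 \<subseteq> X1 \<and>
        (\<forall>\<gamma>1\<in>\<Gamma>1. \<gamma>1 \<noteq> \<one>\<^bsub>G\<^esub> \<longrightarrow> \<phi> \<gamma>1 ` X2 \<subseteq> X1) \<and>
        (\<forall>\<gamma>2\<in>\<Gamma>2. \<gamma>2 \<noteq> \<one>\<^bsub>G\<^esub> \<longrightarrow> \<phi> \<gamma>2 ` X1 \<subseteq> X2))"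

end

theory Submission
  imports Defs "HOL-Algebra.Generated_Groups"
begin


definition pidx :: "'a set list \<Rightarrow> 'a \<Rightarrow> nat" where
  "pidx Ps x = Suc (SOME i. i < length Ps \<and> x \<in> Ps ! i)"

lemma pidx:
  assumes "is_fin_partition S Ps" "x \<in> S"
  shows "pidx Ps x - 1 < length Ps \<and> x \<in> Ps ! (pidx Ps x - 1) \<and> 1 \<le> pidx Ps x"
proof -
  have "\<exists>i. i < length Ps \<and> x \<in> Ps ! i"
    using assms unfolding is_fin_partition_def by (metis UnionE in_set_conv_nth)
  then have "(SOME i. i < length Ps \<and> x \<in> Ps ! i) < length Ps \<and> x \<in> Ps ! (SOME i. i < length Ps \<and> x \<in> Ps ! i)"
    by (rule someI_ex)
  then show ?thesis unfolding pidx_def by simp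
qed

lemma pidx_unique:
  assumes "is_fin_partition S Ps" "i < length Ps" "x \<in> Ps ! i"
  shows "pidx Ps x = Suc i"
proof -
  have xS: "x \<in> S" using assms unfolding is_fin_partition_def by auto
  from pidx[OF assms(1) xS] have "pidx Ps x - 1 < length Ps" "x \<in> Ps ! (pidx Ps x - 1)" "1 \<le> pidx Ps x" by auto
  moreover have "pidx Ps x - 1 = i"
  proof (rule ccontr)
    assume "pidx Ps x - 1 \<noteq> i"
    then have "Ps ! (pidx Ps x - 1) \<inter> Ps ! i = {}" using assms(1,2) calculation unfolding is_fin_partition_def by blast
    then show False using calculation assms(3) by blast
  qed
  ultimately show ?thesis by simp
qed

definition cfg :: "'a set list \<Rightarrow> ('a, 'b) monoid_scheme \<Rightarrow> 'a list \<Rightarrow> 'a \<Rightarrow> nat list" where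
  "cfg Ps M gs x = map (pidx Ps) (x # map (\<lambda>g. g \<otimes>\<^bsub>M\<^esub> x) gs)"

lemma cfg_in:
  assumes "group M" "is_fin_partition (carrier M) Ps" "set gs \<subseteq> carrier M" "x \<in> carrier M"
  shows "cfg Ps M gs x \<in> Con_tuple M gs Ps"
proof -
  have cl: "\<And>i. i < length gs \<Longrightarrow> gs ! i \<otimes>\<^bsub>M\<^esub> x \<in> carrier M"
    using assms by (meson group.is_monoid monoid.m_closed nth_mem subsetD)
  have "\<forall>j<length (cfg Ps M gs x). 1 \<le> cfg Ps M gs x ! j \<and> cfg Ps M gs x ! j \<le> length Ps"
  proof (intro allI impI)
    fix j assume j: "j < length (cfg Ps M gs x)"
    show "1 \<le> cfg Ps M gs x ! j \<and> cfg Ps M gs x ! j \<le> length Ps"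
    proof (cases j)
      case 0 then show ?thesis using pidx[OF assms(2) assms(4)] by (simp add: cfg_def) linarith
    next
      case (Suc k)
      then have "k < length gs" using j by (simp add: cfg_def)
      then show ?thesis using pidx[OF assms(2) cl[OF \<open>k < length gs\<close>]] Suc by (simp add: cfg_def) linarith
    qed
  qed
  moreover have "x \<in> Ps ! (cfg Ps M gs x ! 0 - 1)"
    using pidx[OF assms(2) assms(4)] by (simp add: cfg_def)
  moreover have "\<forall>i<length gs. gs ! i \<otimes>\<^bsub>M\<^esub> x \<in> Ps ! (cfg Ps M gs x ! (Suc i) - 1)"
    using pidx[OF assms(2) cl] by (simp add: cfg_def)
  ultimately show ?thesis unfolding Con_tuple_def using assms(4) by (auto simp: cfg_def)
qed

lemma transfer:
  fixes G :: "('a, 'c) monoid_scheme" and H :: "('b, 'd) monoid_scheme" and f :: "'a \<Rightarrow> 't::enum"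
  assumes gG: "group G" and gH: "group H" and C: "Con G = Con H" and gs: "set gs \<subseteq> carrier G"
  shows "\<exists>hs fH. length hs = length gs \<and> set hs \<subseteq> carrier H \<and>
   (\<forall>h\<in>carrier H. \<exists>g\<in>carrier G. fH h = f g \<and> (\<forall>i<length gs. fH (hs!i \<otimes>\<^bsub>H\<^esub> h) = f (gs!i \<otimes>\<^bsub>G\<^esub> g))) \<and>
   (\<forall>g\<in>carrier G. \<exists>h\<in>carrier H. fH h = f g \<and> (\<forall>i<length gs. fH (hs!i \<otimes>\<^bsub>H\<^esub> h) = f (gs!i \<otimes>\<^bsub>G\<^esub> g)))"
proof -
  define L where "L = filter (\<lambda>t. \<exists>x\<in>carrier G. f x = t) Enum.enum"
  define Es where "Es = map (\<lambda>t. {x\<in>carrier G. f x = t}) L"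
  have dL: "distinct L" unfolding L_def by (rule distinct_filter[OF enum_distinct])
  have lenE: "length Es = length L" unfolding Es_def by simp
  have Esi: "\<And>i. i < length L \<Longrightarrow> Es ! i = {x\<in>carrier G. f x = L ! i}" unfolding Es_def by simp
  have part: "is_fin_partition (carrier G) Es"
    unfolding is_fin_partition_def
  proof (intro conjI allI impI)
    show "\<Union> (set Es) = carrier G"
    proof
      show "\<Union> (set Es) \<subseteq> carrier G" unfolding Es_def by auto
      show "carrier G \<subseteq> \<Union> (set Es)"
      proof
        fix x assume x: "x \<in> carrier G"
        have "f x \<in> set L" unfolding L_def using x UNIV_enum by auto
        then show "x \<in> \<Union> (set Es)" unfolding Es_def using x by auto
      qed
    qed
  next
    fix i assume "i < length Es"
    then have "i < length L" by (simp add: lenE)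
    then have "L ! i \<in> set L" by simp
    then show "Es ! i \<noteq> {}" using Esi[OF \<open>i < length L\<close>] unfolding L_def by auto
  next
    fix i j assume "i < length Es" "j < length Es" "i \<noteq> j"
    then have "L ! i \<noteq> L ! j" using dL lenE by (simp add: nth_eq_iff_index_eq)
    then show "Es ! i \<inter> Es ! j = {}" using Esi \<open>i < length Es\<close> \<open>j < length Es\<close> lenE by auto
  qed
  have "Con_tuple G gs Es \<in> Con H" using C gs part unfolding Con_def by blast
  then obtain hs Fs where hs: "set hs \<subseteq> carrier H" and Fs: "is_fin_partition (carrier H) Fs"
    and eq: "Con_tuple H hs Fs = Con_tuple G gs Es" unfolding Con_def by blast
  have "cfg Es G gs \<one>\<^bsub>G\<^esub> \<in> Con_tuple H hs Fs"
    using eq cfg_in[OF gG part gs] gG by (simp add: group.is_monoid monoid.one_closed)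
  then have len: "length hs = length gs" unfolding Con_tuple_def cfg_def by simp
  define fH where "fH h = L ! (pidx Fs h - 1)" for h
  have fGx: "f x = L ! (pidx Es x - 1)" if x: "x \<in> carrier G" for x
  proof -
    from pidx[OF part x] have "pidx Es x - 1 < length L" "x \<in> Es ! (pidx Es x - 1)" by (auto simp: lenE)
    then show ?thesis using Esi by auto
  qed
  have fwd: "\<forall>h\<in>carrier H. \<exists>g\<in>carrier G. fH h = f g \<and> (\<forall>i<length gs. fH (hs!i \<otimes>\<^bsub>H\<^esub> h) = f (gs!i \<otimes>\<^bsub>G\<^esub> g))"
  proof
    fix h assume h: "h \<in> carrier H"
    let ?C = "cfg Fs H hs h"
    have "?C \<in> Con_tuple G gs Es" using cfg_in[OF gH Fs hs h] eq by simp
    then obtain g where g: "g \<in> carrier G" "g \<in> Es ! (?C ! 0 - 1)"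
      and gi: "\<forall>i<length gs. gs ! i \<otimes>\<^bsub>G\<^esub> g \<in> Es ! (?C ! (Suc i) - 1)"
      and rng: "\<forall>j<length ?C. 1 \<le> ?C ! j \<and> ?C ! j \<le> length Es"
      unfolding Con_tuple_def by blast
    have "fH h = f g"
    proof -
      have "?C ! 0 - 1 < length L" using rng lenE by (auto simp: cfg_def)
      then show ?thesis using g Esi unfolding fH_def by (auto simp: cfg_def)
    qed
    moreover have "\<forall>i<length gs. fH (hs!i \<otimes>\<^bsub>H\<^esub> h) = f (gs!i \<otimes>\<^bsub>G\<^esub> g)"
    proof (intro allI impI)
      fix i assume i: "i < length gs"
      have "Suc i < length ?C" using i len by (simp add: cfg_def)
      then have "1 \<le> ?C ! Suc i" "?C ! Suc i \<le> length Es" using rng by blast+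
      then have "?C ! Suc i - 1 < length L" using lenE by linarith
      moreover have "?C ! Suc i = pidx Fs (hs!i \<otimes>\<^bsub>H\<^esub> h)" using i len by (simp add: cfg_def)
      ultimately show "fH (hs!i \<otimes>\<^bsub>H\<^esub> h) = f (gs!i \<otimes>\<^bsub>G\<^esub> g)"
        using gi i Esi unfolding fH_def by auto
    qed
    ultimately show "\<exists>g\<in>carrier G. fH h = f g \<and> (\<forall>i<length gs. fH (hs!i \<otimes>\<^bsub>H\<^esub> h) = f (gs!i \<otimes>\<^bsub>G\<^esub> g))"
      using g by blast
  qed
  have bwd: "\<forall>g\<in>carrier G. \<exists>h\<in>carrier H. fH h = f g \<and> (\<forall>i<length gs. fH (hs!i \<otimes>\<^bsub>H\<^esub> h) = f (gs!i \<otimes>\<^bsub>G\<^esub> g))"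
  proof
    fix g assume g: "g \<in> carrier G"
    have cl: "\<And>i. i < length gs \<Longrightarrow> gs ! i \<otimes>\<^bsub>G\<^esub> g \<in> carrier G"
      using gs g gG by (meson group.is_monoid monoid.m_closed nth_mem subsetD)
    let ?C = "cfg Es G gs g"
    have "?C \<in> Con_tuple H hs Fs" using cfg_in[OF gG part gs g] eq by simp
    then obtain h where h: "h \<in> carrier H" "h \<in> Fs ! (?C ! 0 - 1)"
      and hi: "\<forall>i<length hs. hs ! i \<otimes>\<^bsub>H\<^esub> h \<in> Fs ! (?C ! (Suc i) - 1)"
      and rng: "\<forall>j<length ?C. 1 \<le> ?C ! j \<and> ?C ! j \<le> length Fs"
      unfolding Con_tuple_def by blast
    have "pidx Fs h = ?C ! 0"
    proof -
      have "1 \<le> ?C ! 0" "?C ! 0 \<le> length Fs" using rng by (auto simp: cfg_def)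
      then show ?thesis using pidx_unique[OF Fs _ h(2)] by simp
    qed
    then have "fH h = f g" unfolding fH_def using fGx[OF g] by (simp add: cfg_def)
    moreover have "\<forall>i<length gs. fH (hs!i \<otimes>\<^bsub>H\<^esub> h) = f (gs!i \<otimes>\<^bsub>G\<^esub> g)"
    proof (intro allI impI)
      fix i assume i: "i < length gs"
      have "1 \<le> ?C ! Suc i" "?C ! Suc i \<le> length Fs" using rng i by (auto simp: cfg_def)
      then have "pidx Fs (hs!i \<otimes>\<^bsub>H\<^esub> h) = ?C ! Suc i"
        using pidx_unique[OF Fs _ hi[rule_format, of i]] i len by simp
      then show "fH (hs!i \<otimes>\<^bsub>H\<^esub> h) = f (gs!i \<otimes>\<^bsub>G\<^esub> g)"
        unfolding fH_def using fGx[OF cl[OF i]] i by (simp add: cfg_def)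
    qed
    ultimately show "\<exists>h\<in>carrier H. fH h = f g \<and> (\<forall>i<length gs. fH (hs!i \<otimes>\<^bsub>H\<^esub> h) = f (gs!i \<otimes>\<^bsub>G\<^esub> g))"
      using h by blast
  qed
  show ?thesis using len hs fwd bwd by blast
qed



definition pp :: "bool \<times> bool \<times> bool \<times> bool \<times> bool \<Rightarrow> bool" where "pp t = fst t"
definition pm :: "bool \<times> bool \<times> bool \<times> bool \<times> bool \<Rightarrow> bool" where "pm t = fst (snd t)"
definition qp :: "bool \<times> bool \<times> bool \<times> bool \<times> bool \<Rightarrow> bool" where "qp t = fst (snd (snd t))"
definition qm :: "bool \<times> bool \<times> bool \<times> bool \<times> bool \<Rightarrow> bool" where "qm t = fst (snd (snd (snd t)))"
definition rr :: "bool \<times> bool \<times> bool \<times> bool \<times> bool \<Rightarrow> bool" where "rr t = snd (snd (snd (snd t)))"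

definition locok where
  "locok t t1 t2 \<longleftrightarrow> ((qp t \<or> qm t \<or> pp t \<or> rr t) \<longrightarrow> pp t1) \<and>
     (\<not> pm t \<longrightarrow> \<not> (qp t1 \<or> qm t1 \<or> pm t1 \<or> rr t1)) \<and>
     ((pp t \<or> pm t \<or> qp t) \<longrightarrow> qp t2) \<and>
     (\<not> qm t \<longrightarrow> \<not> (pp t2 \<or> pm t2 \<or> qm t2))"

definition base where "base t \<longleftrightarrow> rr t \<and> \<not> pp t \<and> \<not> pm t"

lemma (in group) lmult_action:
  "group_action G {S. S \<subseteq> carrier G} (\<lambda>g. \<lambda>S\<in>{S. S \<subseteq> carrier G}. (\<lambda>x. g \<otimes> x) ` S)"
proof -
  let ?E = "{S. S \<subseteq> carrier G}"
  let ?p = "\<lambda>g. \<lambda>S\<in>?E. (\<lambda>x. g \<otimes> x) ` S"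
  have img: "\<And>g S. g \<in> carrier G \<Longrightarrow> S \<in> ?E \<Longrightarrow> ?p g S \<in> ?E" by auto
  have cancel: "\<And>g S. g \<in> carrier G \<Longrightarrow> S \<in> ?E \<Longrightarrow> ?p (inv g) (?p g S) = S"
  proof -
    fix g S assume g: "g \<in> carrier G" and S: "S \<in> ?E"
    have "(\<lambda>x. inv g \<otimes> x) ` (\<lambda>x. g \<otimes> x) ` S = S"
      using g S by (force simp: image_image m_assoc[symmetric])
    then show "?p (inv g) (?p g S) = S" using g S img by simp
  qed
  have bij: "\<And>g. g \<in> carrier G \<Longrightarrow> ?p g \<in> Bij ?E"
  proof -
    fix g assume g: "g \<in> carrier G"
    have "bij_betw (?p g) ?E ?E"
    proof (rule bij_betw_byWitness[where f' = "?p (inv g)"])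
      show "\<forall>a\<in>?E. ?p (inv g) (?p g a) = a" using cancel g by blast
      show "\<forall>a\<in>?E. ?p g (?p (inv g) a) = a" using cancel[of "inv g"] g by simp
      show "?p g ` ?E \<subseteq> ?E" using img g by blast
      show "?p (inv g) ` ?E \<subseteq> ?E" using img g by blast
    qed
    then show "?p g \<in> Bij ?E" unfolding Bij_def by simp
  qed
  have mult: "\<And>x y. x \<in> carrier G \<Longrightarrow> y \<in> carrier G \<Longrightarrow> ?p (x \<otimes> y) = compose ?E (?p x) (?p y)"
  proof -
    fix x y assume x: "x \<in> carrier G" and y: "y \<in> carrier G"
    show "?p (x \<otimes> y) = compose ?E (?p x) (?p y)"
    proof (rule ext)
      fix S show "?p (x \<otimes> y) S = compose ?E (?p x) (?p y) S"
      proof (cases "S \<in> ?E")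
        case True
        then have "?p y S \<in> ?E" using img y by blast
        have e: "(\<lambda>z. x \<otimes> z) ` ((\<lambda>z. y \<otimes> z) ` S) = (\<lambda>z. (x \<otimes> y) \<otimes> z) ` S"
          unfolding image_image
        proof (rule image_cong)
          fix z assume "z \<in> S" then show "x \<otimes> (y \<otimes> z) = x \<otimes> y \<otimes> z" using True x y by (auto simp: m_assoc)
        qed simp
        then show ?thesis using True x y \<open>?p y S \<in> ?E\<close> by (simp add: compose_def)
      next
        case False then show ?thesis by (simp add: compose_def)
      qed
    qed
  qed
  have "?p \<in> hom G (BijGroup ?E)"
    unfolding hom_def BijGroup_def using bij mult by (auto simp: compose_Bij)
  then show ?thesis
    unfolding group_action_def group_hom_def group_hom_axioms_def
    using is_group group_BijGroup by blast
qed

lemma (in group) iter_pow: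
  assumes w: "w \<in> carrier G" and st: "\<forall>h\<in>carrier G. (A h \<or> Q h) \<longrightarrow> Q (w \<otimes> h)"
  shows "\<forall>h\<in>carrier G. (A h \<or> Q h) \<longrightarrow> Q (w [^] Suc n \<otimes> h)"
proof (induction n)
  case 0 then show ?case using st w by simp
next
  case (Suc n)
  show ?case
  proof (intro ballI impI)
    fix h assume h: "h \<in> carrier G" and a: "A h \<or> Q h"
    have "w [^] Suc (Suc n) \<otimes> h = w [^] Suc n \<otimes> (w \<otimes> h)"
      using w h by (simp add: m_assoc)
    moreover have "Q (w \<otimes> h)" using st h a by blast
    ultimately show "Q (w [^] Suc (Suc n) \<otimes> h)" using Suc w h by simp
  qed
qed

lemma (in group) int_pow_cases:
  assumes x: "x \<in> carrier G" and k: "(k::int) \<noteq> 0"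
  shows "\<exists>n. x [^] k = x [^] Suc n \<or> x [^] k = (inv x) [^] Suc n"
proof (cases "k < 0")
  case True
  have e1: "x [^] k = inv (x [^] (nat (-k)))" using True by (simp only: int_pow_def2 if_True)
  have e2: "nat (-k) = Suc (nat (-k) - 1)" using True by linarith
  have "x [^] k = (inv x) [^] Suc (nat (-k) - 1)"
    using e1 e2 nat_pow_inv[OF x, of "nat (-k)"] by metis
  then show ?thesis by blast
next
  case False
  have e1: "x [^] k = x [^] (nat k)" using False by (simp only: int_pow_def2 if_False)
  have e2: "nat k = Suc (nat k - 1)" using False k by linarith
  have "x [^] k = x [^] Suc (nat k - 1)" using e1 e2 by metis
  then show ?thesis by blast
qed

lemma (in group) H_side:
  fixes F :: "'a \<Rightarrow> bool \<times> bool \<times> bool \<times> bool \<times> bool"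
  assumes u: "u \<in> carrier G" and v: "v \<in> carrier G"
    and ok: "\<forall>h\<in>carrier G. locok (F h) (F (u \<otimes> h)) (F (v \<otimes> h))"
    and bs: "\<exists>h\<in>carrier G. base (F h)"
  shows "\<exists>(Y :: 'a set set) \<psi>. pingpong_witness G Y \<psi>"
proof -
  have D1: "\<forall>h\<in>carrier G. ((qp (F h) \<or> qm (F h) \<or> rr (F h)) \<or> pp (F h)) \<longrightarrow> pp (F (u \<otimes> h))"
    using ok unfolding locok_def by blast
  have D2: "\<forall>h\<in>carrier G. ((qp (F h) \<or> qm (F h) \<or> rr (F h)) \<or> pm (F h)) \<longrightarrow> pm (F (inv u \<otimes> h))"
  proof (intro ballI impI)
    fix h assume h: "h \<in> carrier G" and a: "(qp (F h) \<or> qm (F h) \<or> rr (F h)) \<or> pm (F h)"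
    have g: "inv u \<otimes> h \<in> carrier G" using u h by simp
    have "u \<otimes> (inv u \<otimes> h) = h" using u h by (simp add: m_assoc[symmetric])
    then show "pm (F (inv u \<otimes> h))" using ok[rule_format, OF g] a unfolding locok_def by auto
  qed
  have D3: "\<forall>h\<in>carrier G. ((pp (F h) \<or> pm (F h)) \<or> qp (F h)) \<longrightarrow> qp (F (v \<otimes> h))"
    using ok unfolding locok_def by blast
  have D4: "\<forall>h\<in>carrier G. ((pp (F h) \<or> pm (F h)) \<or> qm (F h)) \<longrightarrow> qm (F (inv v \<otimes> h))"
  proof (intro ballI impI)
    fix h assume h: "h \<in> carrier G" and a: "(pp (F h) \<or> pm (F h)) \<or> qm (F h)"
    have g: "inv v \<otimes> h \<in> carrier G" using v h by simp
    have "v \<otimes> (inv v \<otimes> h) = h" using v h by (simp add: m_assoc[symmetric])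
    then show "qm (F (inv v \<otimes> h))" using ok[rule_format, OF g] a unfolding locok_def by auto
  qed
  note I1 = iter_pow[OF u D1] and I2 = iter_pow[OF inv_closed[OF u] D2]
  note I3 = iter_pow[OF v D3] and I4 = iter_pow[OF inv_closed[OF v] D4]
  define A1 where "A1 = {h\<in>carrier G. pp (F h) \<or> pm (F h)}"
  define A2 where "A2 = {h\<in>carrier G. qp (F h) \<or> qm (F h) \<or> rr (F h)}"
  define Y where "Y = {S. S \<subseteq> carrier G}"
  define \<psi> where "\<psi> = (\<lambda>g. \<lambda>S\<in>Y. (\<lambda>x. g \<otimes> x) ` S)"
  define X1 where "X1 = (\<lambda>h. {h}) ` A1"
  define X2 where "X2 = (\<lambda>h. {h}) ` A2"
  have act: "group_action G Y \<psi>" unfolding Y_def \<psi>_def by (rule lmult_action)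
  have psi1: "\<And>g h. h \<in> carrier G \<Longrightarrow> \<psi> g {h} = {g \<otimes> h}" unfolding \<psi>_def Y_def by simp
  obtain h0 where h0: "h0 \<in> carrier G" "base (F h0)" using bs by blast
  have Gu: "\<forall>\<gamma>\<in>generate G {u}. \<gamma> \<noteq> \<one> \<longrightarrow> \<psi> \<gamma> ` X2 \<subseteq> X1"
  proof (intro ballI impI)
    fix \<gamma> assume "\<gamma> \<in> generate G {u}" "\<gamma> \<noteq> \<one>"
    then obtain k :: int where k: "\<gamma> = u [^] k" "k \<noteq> 0" using generate_pow[OF u] by fastforce
    then obtain n where n: "\<gamma> = u [^] Suc n \<or> \<gamma> = (inv u) [^] Suc n" using int_pow_cases[OF u] by blast
    show "\<psi> \<gamma> ` X2 \<subseteq> X1"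
    proof
      fix S assume "S \<in> \<psi> \<gamma> ` X2"
      then obtain h where h: "h \<in> A2" "S = {\<gamma> \<otimes> h}" unfolding X2_def A2_def using psi1 by auto
      have hc: "h \<in> carrier G" using h unfolding A2_def by auto
      have "\<gamma> \<otimes> h \<in> A1"
        using n I1[rule_format, OF hc]
          I2[rule_format, OF hc] h u hc
        unfolding A1_def A2_def by auto
      then show "S \<in> X1" unfolding X1_def using h by blast
    qed
  qed
  have Gv: "\<forall>\<gamma>\<in>generate G {v}. \<gamma> \<noteq> \<one> \<longrightarrow> \<psi> \<gamma> ` X1 \<subseteq> X2"
  proof (intro ballI impI)
    fix \<gamma> assume "\<gamma> \<in> generate G {v}" "\<gamma> \<noteq> \<one>"
    then obtain k :: int where k: "\<gamma> = v [^] k" "k \<noteq> 0" using generate_pow[OF v] by fastforce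
    then obtain n where n: "\<gamma> = v [^] Suc n \<or> \<gamma> = (inv v) [^] Suc n" using int_pow_cases[OF v] by blast
    show "\<psi> \<gamma> ` X1 \<subseteq> X2"
    proof
      fix S assume "S \<in> \<psi> \<gamma> ` X1"
      then obtain h where h: "h \<in> A1" "S = {\<gamma> \<otimes> h}" unfolding X1_def A1_def using psi1 by auto
      have hc: "h \<in> carrier G" using h unfolding A1_def by auto
      have "\<gamma> \<otimes> h \<in> A2"
        using n I3[rule_format, OF hc]
          I4[rule_format, OF hc] h v hc
        unfolding A1_def A2_def by auto
      then show "S \<in> X2" unfolding X2_def using h by blast
    qed
  qed
  have b0: "rr (F h0)" "\<not> pp (F h0)" "\<not> pm (F h0)" using h0 unfolding base_def by auto
  have uh0: "pp (F (u \<otimes> h0))" using D1 h0 b0 by blast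
  have uuh0: "pp (F (u \<otimes> (u \<otimes> h0)))" using D1 uh0 u h0 by simp
  have iuh0: "pm (F (inv u \<otimes> h0))" using D2 h0 b0 by blast
  have u1: "u \<noteq> \<one>" using uh0 b0 h0 by auto
  have iu1: "inv u \<noteq> \<one>" using iuh0 b0 h0 by auto
  have uiu: "u \<noteq> inv u"
  proof
    assume "u = inv u"
    then have "u \<otimes> (u \<otimes> h0) = h0" using u h0 by (metis inv_closed l_inv m_assoc l_one)
    then show False using uuh0 b0 by simp
  qed
  have v1: "v \<noteq> \<one>"
  proof
    assume v1: "v = \<one>"
    have c: "u \<otimes> h0 \<in> carrier G" using u h0 by simp
    have "qp (F (u \<otimes> h0))" using D3[rule_format, OF c] uh0 v1 c by simp
    then have "pm (F (inv u \<otimes> (u \<otimes> h0)))" using D2 c by blast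
    moreover have "inv u \<otimes> (u \<otimes> h0) = h0" using u h0 by (simp add: m_assoc[symmetric])
    ultimately show False using b0 by simp
  qed
  have sg1: "subgroup (generate G {u}) G" using generate_is_subgroup u by simp
  have sg2: "subgroup (generate G {v}) G" using generate_is_subgroup v by simp
  have c1: "infinite (generate G {u}) \<or> card (generate G {u}) \<ge> 3"
  proof (cases "finite (generate G {u})")
    case True
    have sub: "{\<one>, u, inv u} \<subseteq> generate G {u}"
      using generate.one generate.incl[of u "{u}"] generate.inv[of u "{u}"] by auto
    have "card {\<one>, u, inv u} = 3" using u1 iu1 uiu by auto
    then show ?thesis using card_mono[OF True sub] by simp
  qed simp
  have c2: "infinite (generate G {v}) \<or> card (generate G {v}) \<ge> 2"
  proof (cases "finite (generate G {v})")
    case True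
    have sub: "{\<one>, v} \<subseteq> generate G {v}"
      using generate.one generate.incl[of v "{v}"] by auto
    have "card {\<one>, v} = 2" using v1 by auto
    then show ?thesis using card_mono[OF True sub] by simp
  qed simp
  have X1Y: "X1 \<subseteq> Y" and X2Y: "X2 \<subseteq> Y" unfolding X1_def X2_def A1_def A2_def Y_def by auto
  have "{h0} \<in> X2" unfolding X2_def A2_def using h0 b0 by auto
  moreover have "{h0} \<notin> X1" unfolding X1_def A1_def using b0 by auto
  ultimately have nsub: "\<not> X2 \<subseteq> X1" by blast
  have "pingpong_witness G Y \<psi>"
    unfolding pingpong_witness_def
    using act sg1 sg2 c1 c2 X1Y X2Y nsub Gu Gv by blast
  then show ?thesis by blast
qed



lemma two_nonid:
  assumes "infinite S \<or> card S \<ge> 3"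
  shows "\<exists>x y. x \<in> S \<and> y \<in> S \<and> x \<noteq> y \<and> x \<noteq> e \<and> y \<noteq> e"
proof -
  have ns: "\<not> S \<subseteq> {e, x}" for x
  proof
    assume sub: "S \<subseteq> {e, x}"
    then have "finite S" by (rule finite_subset) simp
    moreover have "card S \<le> card {e, x}" by (rule card_mono[OF _ sub]) simp
    moreover have "card {e, x} \<le> 2" by (simp add: card_insert_if)
    ultimately show False using assms by linarith
  qed
  obtain x where x: "x \<in> S" "x \<noteq> e" using ns[of e] by auto
  obtain y where y: "y \<in> S" "y \<notin> {e, x}" using ns[of x] by auto
  show ?thesis using x y by blast
qed

lemma one_nonid:
  assumes "infinite S \<or> card S \<ge> 2"
  shows "\<exists>x. x \<in> S \<and> x \<noteq> e"
proof -
  have "\<not> S \<subseteq> {e}"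
  proof
    assume sub: "S \<subseteq> {e}"
    then have "finite S" by (rule finite_subset) simp
    moreover have "card S \<le> card {e}" by (rule card_mono[OF _ sub]) simp
    ultimately show False using assms by simp
  qed
  then show ?thesis by auto
qed

lemma G_side:
  fixes G :: "('a, 'c) monoid_scheme" and X :: "'x set" and \<phi> :: "'a \<Rightarrow> 'x \<Rightarrow> 'x"
  assumes pw: "pingpong_witness G X \<phi>"
  shows "\<exists>u\<in>carrier G. \<exists>v\<in>carrier G. \<exists>f :: 'a \<Rightarrow> bool \<times> bool \<times> bool \<times> bool \<times> bool.
     (\<forall>g\<in>carrier G. locok (f g) (f (u \<otimes>\<^bsub>G\<^esub> g)) (f (v \<otimes>\<^bsub>G\<^esub> g))) \<and> (\<exists>g\<in>carrier G. base (f g))"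
proof -
  obtain \<Gamma>1 \<Gamma>2 X1 X2 where act: "group_action G X \<phi>" and s1: "subgroup \<Gamma>1 G" and s2: "subgroup \<Gamma>2 G"
    and c1: "infinite \<Gamma>1 \<or> card \<Gamma>1 \<ge> 3" and c2: "infinite \<Gamma>2 \<or> card \<Gamma>2 \<ge> 2"
    and X1: "X1 \<subseteq> X" and X2: "X2 \<subseteq> X" and nsub: "\<not> X2 \<subseteq> X1"
    and p1: "\<forall>\<gamma>1\<in>\<Gamma>1. \<gamma>1 \<noteq> \<one>\<^bsub>G\<^esub> \<longrightarrow> \<phi> \<gamma>1 ` X2 \<subseteq> X1"
    and p2: "\<forall>\<gamma>2\<in>\<Gamma>2. \<gamma>2 \<noteq> \<one>\<^bsub>G\<^esub> \<longrightarrow> \<phi> \<gamma>2 ` X1 \<subseteq> X2"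
    using pw unfolding pingpong_witness_def by (elim conjE exE) (rule that; assumption)
  interpret A: group_action G X \<phi> by (rule act)
  interpret G: group G using A.group_hom group_hom.axioms(1) by blast
  have sub1: "\<Gamma>1 \<subseteq> carrier G" using s1 subgroup.subset by blast
  have sub2: "\<Gamma>2 \<subseteq> carrier G" using s2 subgroup.subset by blast
  have cl: "\<And>g p. g \<in> carrier G \<Longrightarrow> p \<in> X \<Longrightarrow> \<phi> g p \<in> X" using A.element_image by blast
  have comp: "\<And>g h p. g \<in> carrier G \<Longrightarrow> h \<in> carrier G \<Longrightarrow> p \<in> X \<Longrightarrow> \<phi> g (\<phi> h p) = \<phi> (g \<otimes>\<^bsub>G\<^esub> h) p"
    using A.composition_rule by simp
  have one: "\<And>p. p \<in> X \<Longrightarrow> \<phi> \<one>\<^bsub>G\<^esub> p = p" using A.id_eq_one by (metis restrict_apply')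
  have canc1: "\<And>g p. g \<in> carrier G \<Longrightarrow> p \<in> X \<Longrightarrow> \<phi> (inv\<^bsub>G\<^esub> g) (\<phi> g p) = p"
    using comp one by (simp add: G.l_inv)
  have canc2: "\<And>g p. g \<in> carrier G \<Longrightarrow> p \<in> X \<Longrightarrow> \<phi> g (\<phi> (inv\<^bsub>G\<^esub> g) p) = p"
    using comp one by (simp add: G.r_inv)
  have P1: "\<And>\<gamma> z. \<gamma> \<in> \<Gamma>1 \<Longrightarrow> \<gamma> \<noteq> \<one>\<^bsub>G\<^esub> \<Longrightarrow> z \<in> X2 \<Longrightarrow> \<phi> \<gamma> z \<in> X1" using p1 by blast
  have P2: "\<And>\<gamma> z. \<gamma> \<in> \<Gamma>2 \<Longrightarrow> \<gamma> \<noteq> \<one>\<^bsub>G\<^esub> \<Longrightarrow> z \<in> X1 \<Longrightarrow> \<phi> \<gamma> z \<in> X2" using p2 by blast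
  obtain x0 where x0: "x0 \<in> X2" "x0 \<notin> X1" using nsub by blast
  have x0X: "x0 \<in> X" using x0 X2 by blast
  obtain a a' where aa: "a \<in> \<Gamma>1" "a' \<in> \<Gamma>1" "a \<noteq> a'" "a \<noteq> \<one>\<^bsub>G\<^esub>" "a' \<noteq> \<one>\<^bsub>G\<^esub>"
    using two_nonid[OF c1] by blast
  obtain b where b: "b \<in> \<Gamma>2" "b \<noteq> \<one>\<^bsub>G\<^esub>" using one_nonid[OF c2] by blast
  obtain c where c: "c \<in> \<Gamma>1" "c \<noteq> \<one>\<^bsub>G\<^esub>" "c \<otimes>\<^bsub>G\<^esub> a \<noteq> \<one>\<^bsub>G\<^esub>"
  proof (cases "a \<otimes>\<^bsub>G\<^esub> a = \<one>\<^bsub>G\<^esub>")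
    case False then show ?thesis using that aa by blast
  next
    case True
    have ac: "a \<in> carrier G" "a' \<in> carrier G" using aa sub1 by auto
    have "a' \<otimes>\<^bsub>G\<^esub> a \<noteq> \<one>\<^bsub>G\<^esub>"
    proof
      assume "a' \<otimes>\<^bsub>G\<^esub> a = \<one>\<^bsub>G\<^esub>"
      then have "inv\<^bsub>G\<^esub> a = a'" using G.inv_equality ac by blast
      moreover have "inv\<^bsub>G\<^esub> a = a" using G.inv_equality ac True by blast
      ultimately show False using aa by simp
    qed
    then show ?thesis using that aa by blast
  qed
  have aG: "a \<in> carrier G" and bG: "b \<in> carrier G" and cG: "c \<in> carrier G"
    using aa b c sub1 sub2 by auto
  have inv_ne: "\<And>x. x \<in> carrier G \<Longrightarrow> x \<noteq> \<one>\<^bsub>G\<^esub> \<Longrightarrow> inv\<^bsub>G\<^esub> x \<noteq> \<one>\<^bsub>G\<^esub>"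
    using G.inv_eq_1_iff by blast
  have Pa: "\<And>z. z \<in> X2 \<Longrightarrow> \<phi> a z \<in> X1" using P1 aa by blast
  have Pia: "\<And>z. z \<in> X2 \<Longrightarrow> \<phi> (inv\<^bsub>G\<^esub> a) z \<in> X1"
    using P1 aa aG inv_ne subgroup.m_inv_closed[OF s1] by blast
  have Pc: "\<And>z. z \<in> X2 \<Longrightarrow> \<phi> c z \<in> X1" using P1 c by blast
  have Pic: "\<And>z. z \<in> X2 \<Longrightarrow> \<phi> (inv\<^bsub>G\<^esub> c) z \<in> X1"
    using P1 c cG inv_ne subgroup.m_inv_closed[OF s1] by blast
  have Pca: "\<And>z. z \<in> X2 \<Longrightarrow> \<phi> (c \<otimes>\<^bsub>G\<^esub> a) z \<in> X1"
    using P1 c aa subgroup.m_closed[OF s1] by blast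
  have Piaic: "\<And>z. z \<in> X2 \<Longrightarrow> \<phi> (inv\<^bsub>G\<^esub> a \<otimes>\<^bsub>G\<^esub> inv\<^bsub>G\<^esub> c) z \<in> X1"
  proof -
    fix z assume z: "z \<in> X2"
    have "inv\<^bsub>G\<^esub> a \<otimes>\<^bsub>G\<^esub> inv\<^bsub>G\<^esub> c = inv\<^bsub>G\<^esub> (c \<otimes>\<^bsub>G\<^esub> a)" using aG cG G.inv_mult_group by simp
    moreover have "inv\<^bsub>G\<^esub> (c \<otimes>\<^bsub>G\<^esub> a) \<in> \<Gamma>1" using c aa subgroup.m_closed[OF s1] subgroup.m_inv_closed[OF s1] by blast
    moreover have "inv\<^bsub>G\<^esub> (c \<otimes>\<^bsub>G\<^esub> a) \<noteq> \<one>\<^bsub>G\<^esub>" using inv_ne c aG cG by simp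
    ultimately show "\<phi> (inv\<^bsub>G\<^esub> a \<otimes>\<^bsub>G\<^esub> inv\<^bsub>G\<^esub> c) z \<in> X1" using P1 z by simp
  qed
  have Pb: "\<And>z. z \<in> X1 \<Longrightarrow> \<phi> b z \<in> X2" using P2 b by blast
  have Pib: "\<And>z. z \<in> X1 \<Longrightarrow> \<phi> (inv\<^bsub>G\<^esub> b) z \<in> X2"
    using P2 b bG inv_ne subgroup.m_inv_closed[OF s2] by blast
  have iaG: "inv\<^bsub>G\<^esub> a \<in> carrier G" and ibG: "inv\<^bsub>G\<^esub> b \<in> carrier G" and icG: "inv\<^bsub>G\<^esub> c \<in> carrier G"
    using aG bG cG by auto
  define PPX where "PPX p \<longleftrightarrow> \<phi> (inv\<^bsub>G\<^esub> a) p \<in> X2" for p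
  define PMX where "PMX p \<longleftrightarrow> \<phi> c p \<in> X2" for p
  define QPX where "QPX p \<longleftrightarrow> \<phi> (inv\<^bsub>G\<^esub> a) (\<phi> (inv\<^bsub>G\<^esub> b) p) \<in> X2" for p
  define QMX where "QMX p \<longleftrightarrow> \<phi> c (\<phi> (inv\<^bsub>G\<^esub> b) p) \<in> X2" for p
  have PP1: "p \<in> X1" if "p \<in> X" "PPX p" for p
    using canc2[OF aG that(1)] Pa that(2) unfolding PPX_def by metis
  have PM1: "p \<in> X1" if "p \<in> X" "PMX p" for p
    using canc1[OF cG that(1)] Pic that(2) unfolding PMX_def by metis
  have QP2: "p \<in> X2" if "p \<in> X" "QPX p" for p
  proof -
    have y: "\<phi> (inv\<^bsub>G\<^esub> b) p \<in> X" using cl ibG that by blast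
    have "\<phi> (inv\<^bsub>G\<^esub> b) p \<in> X1" using canc2[OF aG y] Pa that(2) unfolding QPX_def by metis
    then show ?thesis using canc2[OF bG that(1)] Pb by metis
  qed
  have QM2: "p \<in> X2" if "p \<in> X" "QMX p" for p
  proof -
    have y: "\<phi> (inv\<^bsub>G\<^esub> b) p \<in> X" using cl ibG that by blast
    have "\<phi> (inv\<^bsub>G\<^esub> b) p \<in> X1" using canc1[OF cG y] Pic that(2) unfolding QMX_def by metis
    then show ?thesis using canc2[OF bG that(1)] Pb by metis
  qed
  have L1: "PPX (\<phi> a (\<phi> b (\<phi> c p)))" if p: "p \<in> X" and h: "QPX p \<or> QMX p \<or> PPX p \<or> p = x0" for p
  proof -
    have cp: "\<phi> c p \<in> X1"
    proof (cases "PPX p")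
      case True
      have z: "\<phi> (inv\<^bsub>G\<^esub> a) p \<in> X" using cl iaG p by blast
      have "\<phi> c p = \<phi> (c \<otimes>\<^bsub>G\<^esub> a) (\<phi> (inv\<^bsub>G\<^esub> a) p)"
        using canc2[OF aG p] comp[OF cG aG z] by metis
      then show ?thesis using Pca True unfolding PPX_def by simp
    next
      case False
      then have "p \<in> X2" using h QP2 QM2 p x0 by blast
      then show ?thesis using Pc by blast
    qed
    have w: "\<phi> b (\<phi> c p) \<in> X" using cl bG cG p by blast
    show ?thesis unfolding PPX_def using canc1[OF aG w] Pb[OF cp] by simp
  qed
  have L2: "PMX p" if p: "p \<in> X" and h: "QPX (\<phi> a (\<phi> b (\<phi> c p))) \<or> QMX (\<phi> a (\<phi> b (\<phi> c p))) \<or> PMX (\<phi> a (\<phi> b (\<phi> c p))) \<or> \<phi> a (\<phi> b (\<phi> c p)) = x0" for p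
  proof -
    define q where "q = \<phi> a (\<phi> b (\<phi> c p))"
    have cpX: "\<phi> c p \<in> X" using cl cG p by blast
    have w: "\<phi> b (\<phi> c p) \<in> X" using cl bG cpX by blast
    have qX: "q \<in> X" unfolding q_def using cl aG w by blast
    have e1: "\<phi> (inv\<^bsub>G\<^esub> a) q = \<phi> b (\<phi> c p)" unfolding q_def using canc1[OF aG w] .
    have e2: "\<phi> (inv\<^bsub>G\<^esub> b) (\<phi> (inv\<^bsub>G\<^esub> a) q) = \<phi> c p" using e1 canc1[OF bG cpX] by simp
    have m: "\<phi> (inv\<^bsub>G\<^esub> a) q \<in> X1"
    proof (cases "PMX q")
      case True
      have z: "\<phi> c q \<in> X" using cl cG qX by blast
      have "\<phi> (inv\<^bsub>G\<^esub> a) q = \<phi> (inv\<^bsub>G\<^esub> a \<otimes>\<^bsub>G\<^esub> inv\<^bsub>G\<^esub> c) (\<phi> c q)"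
        using canc1[OF cG qX] comp[OF iaG icG z] by metis
      then show ?thesis using Piaic True unfolding PMX_def by simp
    next
      case False
      then have "q \<in> X2" using h QP2 QM2 qX x0 unfolding q_def by blast
      then show ?thesis using Pia by blast
    qed
    show ?thesis unfolding PMX_def using Pib[OF m] e2 by simp
  qed
  have L3: "QPX (\<phi> b (\<phi> a (\<phi> b (\<phi> c (\<phi> (inv\<^bsub>G\<^esub> b) p)))))" if p: "p \<in> X" and h: "PPX p \<or> PMX p \<or> QPX p" for p
  proof -
    define y where "y = \<phi> (inv\<^bsub>G\<^esub> b) p"
    have yX: "y \<in> X" unfolding y_def using cl ibG p by blast
    have cy: "\<phi> c y \<in> X1"
    proof (cases "QPX p")
      case True
      have z: "\<phi> (inv\<^bsub>G\<^esub> a) y \<in> X" using cl iaG yX by blast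
      have "\<phi> c y = \<phi> (c \<otimes>\<^bsub>G\<^esub> a) (\<phi> (inv\<^bsub>G\<^esub> a) y)"
        using canc2[OF aG yX] comp[OF cG aG z] by metis
      then show ?thesis using Pca True unfolding QPX_def y_def by simp
    next
      case False
      then have "p \<in> X1" using h PP1 PM1 p by blast
      then have "y \<in> X2" unfolding y_def using Pib by blast
      then show ?thesis using Pc by blast
    qed
    have cyX: "\<phi> c y \<in> X" using cl cG yX by blast
    have wX: "\<phi> b (\<phi> c y) \<in> X" using cl bG cyX by blast
    have awX: "\<phi> a (\<phi> b (\<phi> c y)) \<in> X" using cl aG wX by blast
    show ?thesis unfolding QPX_def y_def[symmetric]
      using canc1[OF bG awX] canc1[OF aG wX] Pb[OF cy] by simp
  qed
  have L4: "QMX p" if p: "p \<in> X" and h: "PPX q \<or> PMX q \<or> QMX q" and qd: "q = \<phi> b (\<phi> a (\<phi> b (\<phi> c (\<phi> (inv\<^bsub>G\<^esub> b) p))))" for p q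
  proof -
    define y where "y = \<phi> (inv\<^bsub>G\<^esub> b) p"
    have yX: "y \<in> X" unfolding y_def using cl ibG p by blast
    have cyX: "\<phi> c y \<in> X" using cl cG yX by blast
    have wX: "\<phi> b (\<phi> c y) \<in> X" using cl bG cyX by blast
    define m where "m = \<phi> a (\<phi> b (\<phi> c y))"
    have mX: "m \<in> X" unfolding m_def using cl aG wX by blast
    have qX: "q \<in> X" using qd cl bG mX unfolding m_def y_def by blast
    have e0: "\<phi> (inv\<^bsub>G\<^esub> b) q = m" using qd canc1[OF bG mX] unfolding m_def y_def by simp
    have e1: "\<phi> (inv\<^bsub>G\<^esub> a) m = \<phi> b (\<phi> c y)" unfolding m_def using canc1[OF aG wX] .
    have e2: "\<phi> (inv\<^bsub>G\<^esub> b) (\<phi> (inv\<^bsub>G\<^esub> a) m) = \<phi> c y" using e1 canc1[OF bG cyX] by simp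
    have am: "\<phi> (inv\<^bsub>G\<^esub> a) m \<in> X1"
    proof (cases "QMX q")
      case True
      have z: "\<phi> c m \<in> X" using cl cG mX by blast
      have "\<phi> (inv\<^bsub>G\<^esub> a) m = \<phi> (inv\<^bsub>G\<^esub> a \<otimes>\<^bsub>G\<^esub> inv\<^bsub>G\<^esub> c) (\<phi> c m)"
        using canc1[OF cG mX] comp[OF iaG icG z] by metis
      then show ?thesis using Piaic True e0 unfolding QMX_def by simp
    next
      case False
      then have "q \<in> X1" using h PP1 PM1 qX by blast
      then have "m \<in> X2" using Pib e0 by metis
      then show ?thesis using Pia by blast
    qed
    show ?thesis unfolding QMX_def y_def[symmetric] using Pib[OF am] e2 by simp
  qed
  define u where "u = a \<otimes>\<^bsub>G\<^esub> (b \<otimes>\<^bsub>G\<^esub> c)"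
  define v where "v = b \<otimes>\<^bsub>G\<^esub> (a \<otimes>\<^bsub>G\<^esub> (b \<otimes>\<^bsub>G\<^esub> (c \<otimes>\<^bsub>G\<^esub> inv\<^bsub>G\<^esub> b)))"
  have uG: "u \<in> carrier G" and vG: "v \<in> carrier G" unfolding u_def v_def using aG bG cG by auto
  have uact: "\<phi> u p = \<phi> a (\<phi> b (\<phi> c p))" if "p \<in> X" for p
    unfolding u_def using comp aG bG cG that cl by (metis G.m_closed)
  have vact: "\<phi> v p = \<phi> b (\<phi> a (\<phi> b (\<phi> c (\<phi> (inv\<^bsub>G\<^esub> b) p))))" if "p \<in> X" for p
  proof -
    have "\<phi> (c \<otimes>\<^bsub>G\<^esub> inv\<^bsub>G\<^esub> b) p = \<phi> c (\<phi> (inv\<^bsub>G\<^esub> b) p)" using comp cG ibG that cl by metis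
    moreover have "\<phi> (b \<otimes>\<^bsub>G\<^esub> (c \<otimes>\<^bsub>G\<^esub> inv\<^bsub>G\<^esub> b)) p = \<phi> b (\<phi> (c \<otimes>\<^bsub>G\<^esub> inv\<^bsub>G\<^esub> b) p)"
      using comp bG cG ibG that cl by (metis G.m_closed)
    moreover have "\<phi> (a \<otimes>\<^bsub>G\<^esub> (b \<otimes>\<^bsub>G\<^esub> (c \<otimes>\<^bsub>G\<^esub> inv\<^bsub>G\<^esub> b))) p = \<phi> a (\<phi> (b \<otimes>\<^bsub>G\<^esub> (c \<otimes>\<^bsub>G\<^esub> inv\<^bsub>G\<^esub> b)) p)"
      using comp aG bG cG ibG that cl by (metis G.m_closed)
    moreover have "\<phi> v p = \<phi> b (\<phi> (a \<otimes>\<^bsub>G\<^esub> (b \<otimes>\<^bsub>G\<^esub> (c \<otimes>\<^bsub>G\<^esub> inv\<^bsub>G\<^esub> b))) p)"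
      unfolding v_def using comp aG bG cG ibG that cl by (metis G.m_closed)
    ultimately show ?thesis by simp
  qed
  define f where "f g = (PPX (\<phi> g x0), PMX (\<phi> g x0), QPX (\<phi> g x0), QMX (\<phi> g x0), \<phi> g x0 = x0)" for g
  have ok: "\<forall>g\<in>carrier G. locok (f g) (f (u \<otimes>\<^bsub>G\<^esub> g)) (f (v \<otimes>\<^bsub>G\<^esub> g))"
  proof
    fix g assume g: "g \<in> carrier G"
    define p where "p = \<phi> g x0"
    have pX: "p \<in> X" unfolding p_def using cl g x0X by blast
    have eu: "\<phi> (u \<otimes>\<^bsub>G\<^esub> g) x0 = \<phi> a (\<phi> b (\<phi> c p))" unfolding p_def using comp[OF uG g x0X] uact[OF pX] p_def by simp
    have ev: "\<phi> (v \<otimes>\<^bsub>G\<^esub> g) x0 = \<phi> b (\<phi> a (\<phi> b (\<phi> c (\<phi> (inv\<^bsub>G\<^esub> b) p))))" unfolding p_def using comp[OF vG g x0X] vact[OF pX] p_def by simp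
    show "locok (f g) (f (u \<otimes>\<^bsub>G\<^esub> g)) (f (v \<otimes>\<^bsub>G\<^esub> g))"
      unfolding locok_def f_def pp_def pm_def qp_def qm_def rr_def fst_conv snd_conv eu ev p_def[symmetric]
      using L1[OF pX] L2[OF pX] L3[OF pX] L4[OF pX _ refl] by blast
  qed
  have bs: "base (f \<one>\<^bsub>G\<^esub>)"
  proof -
    have e: "\<phi> \<one>\<^bsub>G\<^esub> x0 = x0" using one x0X by simp
    have "\<not> PPX x0" using PP1 x0X x0 by blast
    moreover have "\<not> PMX x0" using PM1 x0X x0 by blast
    ultimately show ?thesis unfolding base_def f_def pp_def pm_def rr_def e by simp
  qed
  show ?thesis using uG vG ok bs G.one_closed by blast
qed


theorem mainTheorem10:
  fixes G :: "('a, 'c) monoid_scheme" and H :: "('b, 'd) monoid_scheme"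
    and X :: "'x set" and \<phi> :: "'a \<Rightarrow> 'x \<Rightarrow> 'x"
  assumes "group G" and "group H"
    and "Con G = Con H"
    and "pingpong_witness G X \<phi>"
  shows "\<exists>(Y :: 'b set set) \<psi>. pingpong_witness H Y \<psi>"
proof -
  obtain u v f where uG: "u \<in> carrier G" and vG: "v \<in> carrier G"
    and ok: "\<forall>g\<in>carrier G. locok (f g) (f (u \<otimes>\<^bsub>G\<^esub> g)) (f (v \<otimes>\<^bsub>G\<^esub> g))"
    and bs: "\<exists>g\<in>carrier G. base (f g)"
    using G_side[OF assms(4)] by blast
  have gs: "set [u, v] \<subseteq> carrier G" using uG vG by simp
  obtain hs fH where len: "length hs = length [u, v]" and hs: "set hs \<subseteq> carrier H"
    and fwd: "\<forall>h\<in>carrier H. \<exists>g\<in>carrier G. fH h = f g \<and> (\<forall>i<length [u, v]. fH (hs!i \<otimes>\<^bsub>H\<^esub> h) = f ([u, v]!i \<otimes>\<^bsub>G\<^esub> g))"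
    and bwd: "\<forall>g\<in>carrier G. \<exists>h\<in>carrier H. fH h = f g \<and> (\<forall>i<length [u, v]. fH (hs!i \<otimes>\<^bsub>H\<^esub> h) = f ([u, v]!i \<otimes>\<^bsub>G\<^esub> g))"
    using transfer[OF assms(1) assms(2) assms(3) gs, of f] by blast
  have u'H: "hs ! 0 \<in> carrier H" using len hs by (simp add: subset_code(1))
  have v'H: "hs ! 1 \<in> carrier H" using len hs by (simp add: subset_code(1))
  have okH: "\<forall>h\<in>carrier H. locok (fH h) (fH (hs!0 \<otimes>\<^bsub>H\<^esub> h)) (fH (hs!1 \<otimes>\<^bsub>H\<^esub> h))"
  proof
    fix h assume h: "h \<in> carrier H"
    obtain g where g: "g \<in> carrier G" "fH h = f g"
      and gi: "\<forall>i<length [u, v]. fH (hs!i \<otimes>\<^bsub>H\<^esub> h) = f ([u, v]!i \<otimes>\<^bsub>G\<^esub> g)"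
      using fwd h by blast
    have "fH (hs!0 \<otimes>\<^bsub>H\<^esub> h) = f (u \<otimes>\<^bsub>G\<^esub> g)" using gi[rule_format, of 0] by simp
    moreover have "fH (hs!1 \<otimes>\<^bsub>H\<^esub> h) = f (v \<otimes>\<^bsub>G\<^esub> g)" using gi[rule_format, of 1] by simp
    ultimately show "locok (fH h) (fH (hs!0 \<otimes>\<^bsub>H\<^esub> h)) (fH (hs!1 \<otimes>\<^bsub>H\<^esub> h))"
      using ok g by simp
  qed
  have bsH: "\<exists>h\<in>carrier H. base (fH h)"
  proof -
    obtain g where g: "g \<in> carrier G" "base (f g)" using bs by blast
    then obtain h where h: "h \<in> carrier H" "fH h = f g" using bwd by blast
    then have "base (fH h)" using g(2) by simp
    then show ?thesis using h(1) by blast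
  qed
  show ?thesis using group.H_side[OF assms(2) u'H v'H okH bsH] .
qed

end
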